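(* Let $T\subseteq 2^{<\omega}$ be a tree with $\lambda([T])>0$ and let $\varepsilon>0$. Call $s\in T\cap 2^k$ fat if $\lambda([T]\cap[s])\ge(1-\varepsilon)/2^k$. Then there is $k^*<\omega$ such that for all $k\ge k^*$, the number of fat nodes $s\in T\cap 2^k$ is at least $|T\cap 2^k|\cdot(1-\varepsilon)$.
   Context: A tree is a subset of $2^{<\omega}$ closed under initial segments; $[T]$ is its set of branches in $2^\omega$, $[s]$ is the set of $x\in 2^\omega$ extending $s$, and $\lambda$ is the standard product (Lebesgue) measure on $2^\omega$. *)

theory Defs
  imports "HOL-Probability.Probability"
begin

text \<open>Finite binary strings 2^{<omega} are bool lists; 2^omega is nat => bool.\<close>

definition is_tree :: "bool list set \<Rightarrow> bool" where
  "is_tree T \<longleftrightarrow> (\<forall>s\<in>T. \<forall>n. take n s \<in> T)"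

definition branches :: "bool list set \<Rightarrow> (nat \<Rightarrow> bool) set" where
  "branches T = {x. \<forall>n. map x [0..<n] \<in> T}"

definition cyl :: "bool list \<Rightarrow> (nat \<Rightarrow> bool) set" where
  "cyl s = {x. \<forall>i<length s. x i = s ! i}"

definition lam :: "(nat \<Rightarrow> bool) measure" where
  "lam = PiM UNIV (\<lambda>_. measure_pmf (bernoulli_pmf (1/2)))"

definition level :: "bool list set \<Rightarrow> nat \<Rightarrow> bool list set" where
  "level T k = {s\<in>T. length s = k}"

definition fat :: "bool list set \<Rightarrow> real \<Rightarrow> bool list \<Rightarrow> bool" where
  "fat T \<epsilon> s \<longleftrightarrow> measure lam (branches T \<inter> cyl s) \<ge> (1 - \<epsilon>) / 2 ^ length s"

end

theory Submission imports Defs begin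

lemma lam_prob: "prob_space lam"
  unfolding lam_def by (intro prob_space_PiM) (simp add: prob_space_measure_pmf)

lemma space_lam: "space lam = UNIV"
  unfolding lam_def by (simp add: space_PiM)

lemma sets_lam_coord: "{x. x i = b} \<in> sets lam"
proof -
  have "(\<lambda>x. x i) \<in> measurable lam (measure_pmf (bernoulli_pmf (1/2)))"
    unfolding lam_def by (rule measurable_component_singleton) simp
  hence "(\<lambda>x. x i) -` {b} \<inter> space lam \<in> sets lam"
    by (rule measurable_sets) simp
  thus ?thesis by (simp add: space_lam vimage_def)
qed

lemma cyl_eq: "cyl s = (\<Inter>i<length s. {x. x i = s ! i})"
  unfolding cyl_def by auto

lemma sets_cyl: "cyl s \<in> sets lam"
proof (cases "length s = 0")
  case True thus ?thesis using sets.top[of lam] by (simp add: cyl_def space_lam)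
next
  case False
  thus ?thesis unfolding cyl_eq by (intro sets.finite_INT) (auto intro: sets_lam_coord)
qed

lemma cyl_prod_emb: "cyl s = prod_emb UNIV (\<lambda>_. measure_pmf (bernoulli_pmf (1/2))) {..<length s} (Pi\<^sub>E {..<length s} (\<lambda>i. {s!i}))"
  unfolding cyl_def prod_emb_def by (auto simp: PiE_def Pi_def)

lemma measure_cyl: "measure lam (cyl s) = 1 / 2 ^ length s"
proof -
  have "emeasure lam (cyl s) = (\<Prod>i\<in>{..<length s}. emeasure (measure_pmf (bernoulli_pmf (1/2))) {s!i})"
    unfolding cyl_prod_emb lam_def
    by (rule emeasure_PiM_emb) (auto simp: prob_space_measure_pmf)
  also have "\<dots> = (\<Prod>i\<in>{..<length s}. ennreal (1/2))"
    by (simp add: emeasure_pmf_single)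
  also have "\<dots> = ennreal ((1/2) ^ length s)"
    using ennreal_power[of "1/2" "length s"] by simp
  finally show ?thesis
    by (simp add: measure_def power_divide)
qed

lemma cyl_iff: "length s = k \<Longrightarrow> (x \<in> cyl s) = (map x [0..<k] = s)"
  unfolding cyl_def by (auto simp: list_eq_iff_nth_eq)

lemma finite_level: "finite (level T k)"
proof -
  have "level T k \<subseteq> {xs. set xs \<subseteq> UNIV \<and> length xs = k}" by (auto simp: level_def)
  thus ?thesis by (rule finite_subset) (rule finite_lists_length_eq, simp)
qed

lemma U_eq: "{x. map x [0..<k] \<in> T} = (\<Union>s\<in>level T k. cyl s)"
  by (auto simp: level_def cyl_iff)

lemma disj_cyl: "disjoint_family_on cyl (level T k)"
  unfolding disjoint_family_on_def level_def by (auto simp: cyl_iff)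

lemma measure_U: "measure lam {x. map x [0..<k] \<in> T} = card (level T k) / 2 ^ k"
proof -
  interpret prob_space lam by (rule lam_prob)
  have "measure lam {x. map x [0..<k] \<in> T} = (\<Sum>s\<in>level T k. measure lam (cyl s))"
    unfolding U_eq by (rule finite_measure_finite_Union) (auto simp: finite_level disj_cyl sets_cyl)
  also have "\<dots> = (\<Sum>s\<in>level T k. 1 / 2 ^ k)"
    by (rule sum.cong) (auto simp: measure_cyl level_def)
  finally show ?thesis by simp
qed

lemma sets_U: "{x. map x [0..<k] \<in> T} \<in> sets lam"
  unfolding U_eq by (rule sets.finite_UN) (auto simp: finite_level sets_cyl)

lemma decseq_U: "is_tree T \<Longrightarrow> decseq (\<lambda>k. {x. map x [0..<k] \<in> T})"
  unfolding decseq_def is_tree_def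
proof (intro allI impI subsetI)
  fix m n x assume t: "\<forall>s\<in>T. \<forall>n. take n s \<in> T" and mn: "m \<le> n" and x: "x \<in> {x. map x [0..<n] \<in> T}"
  have "take m (map x [0..<n]) = map x [0..<m]" using mn by (simp add: take_map)
  thus "x \<in> {x. map x [0..<m] \<in> T}" using t x by (metis mem_Collect_eq)
qed

lemma branches_INT: "branches T = (\<Inter>k. {x. map x [0..<k] \<in> T})"
  unfolding branches_def by auto

lemma sets_branches: "branches T \<in> sets lam"
  unfolding branches_INT by (rule sets.countable_INT') (auto simp: sets_U)

lemma measure_branches_sum: "measure lam (branches T) = (\<Sum>s\<in>level T k. measure lam (branches T \<inter> cyl s))"
proof -
  interpret prob_space lam by (rule lam_prob)
  have "branches T = (\<Union>s\<in>level T k. branches T \<inter> cyl s)"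
    using U_eq[of k T] branches_INT[of T] by blast
  hence "measure lam (branches T) = measure lam (\<Union>s\<in>level T k. branches T \<inter> cyl s)" by simp
  also have "\<dots> = (\<Sum>s\<in>level T k. measure lam (branches T \<inter> cyl s))"
    using finite_level[of T k]
    by (intro finite_measure_finite_Union)
       (auto simp: sets_cyl sets_branches disjoint_family_on_def level_def cyl_iff)
  finally show ?thesis .
qed

lemma lim_U: "is_tree T \<Longrightarrow> (\<lambda>k. card (level T k) / 2 ^ k) \<longlonglongrightarrow> measure lam (branches T)"
proof -
  assume t: "is_tree T"
  interpret prob_space lam by (rule lam_prob)
  have "(\<lambda>k. measure lam {x. map x [0..<k] \<in> T}) \<longlonglongrightarrow> measure lam (\<Inter>k. {x. map x [0..<k] \<in> T})"
    by (rule finite_Lim_measure_decseq) (auto simp: sets_U decseq_U[OF t])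
  thus ?thesis by (simp add: measure_U branches_INT)
qed

theorem lemma12p2:
  fixes T :: "bool list set" and \<epsilon> :: real
  assumes "is_tree T"
    and "measure lam (branches T) > 0"
    and "\<epsilon> > 0"
  shows "\<exists>kstar::nat. \<forall>k\<ge>kstar.
           real (card {s\<in>level T k. fat T \<epsilon> s}) \<ge> real (card (level T k)) * (1 - \<epsilon>)"
proof -
  interpret prob_space lam by (rule lam_prob)
  define \<mu> where "\<mu> = measure lam (branches T)"
  have mu: "\<mu> > 0" using assms(2) by (simp add: \<mu>_def)
  have epos: "\<epsilon> * \<epsilon> * \<mu> > 0" using mu assms(3) by simp
  obtain kstar where ks: "\<And>k. k \<ge> kstar \<Longrightarrow> dist (card (level T k) / 2 ^ k) \<mu> < \<epsilon> * \<epsilon> * \<mu>"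
    using lim_U[OF assms(1)] epos unfolding LIMSEQ_def \<mu>_def by blast
  show ?thesis
  proof (intro exI allI impI)
    fix k assume k: "kstar \<le> k"
    define a :: real where "a = 2 ^ k"
    define L where "L = level T k"
    define N where "N = card L"
    define F where "F = {s\<in>L. fat T \<epsilon> s}"
    define B where "B = {s\<in>L. \<not> fat T \<epsilon> s}"
    have apos: "a > 0" by (simp add: a_def)
    have finL: "finite L" by (simp add: L_def finite_level)
    have NFB: "N = card F + card B"
    proof -
      have "L = F \<union> B" "F \<inter> B = {}" by (auto simp: F_def B_def)
      thus ?thesis unfolding N_def using finL
        by (metis card_Un_disjoint finite_Un)
    qed
    have bound: "measure lam (branches T \<inter> cyl s) \<le> 1 / a - (if fat T \<epsilon> s then 0 else \<epsilon> / a)"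
      if s: "s \<in> L" for s
    proof -
      have ls: "length s = k" using s by (simp add: L_def level_def)
      show ?thesis
      proof (cases "fat T \<epsilon> s")
        case True
        have "measure lam (branches T \<inter> cyl s) \<le> measure lam (cyl s)"
          by (rule finite_measure_mono) (auto simp: sets_cyl)
        thus ?thesis using True by (simp add: measure_cyl ls a_def)
      next
        case False
        hence "measure lam (branches T \<inter> cyl s) < (1 - \<epsilon>) / a"
          by (simp add: fat_def ls a_def)
        thus ?thesis using False by (simp add: diff_divide_distrib)
      qed
    qed
    have "\<mu> = (\<Sum>s\<in>L. measure lam (branches T \<inter> cyl s))"
      unfolding \<mu>_def L_def by (rule measure_branches_sum)
    also have "\<dots> \<le> (\<Sum>s\<in>L. 1 / a - (if fat T \<epsilon> s then 0 else \<epsilon> / a))"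
      by (rule sum_mono) (rule bound)
    also have "\<dots> = N / a - (\<Sum>s\<in>L. (if fat T \<epsilon> s then 0 else \<epsilon> / a))"
      by (simp add: sum_subtractf N_def)
    also have "(\<Sum>s\<in>L. (if fat T \<epsilon> s then 0 else \<epsilon> / a)) = card B * (\<epsilon> / a)"
    proof -
      have "(\<Sum>s\<in>L. (if fat T \<epsilon> s then 0 else \<epsilon> / a)) = (\<Sum>s\<in>L. (if \<not> fat T \<epsilon> s then \<epsilon> / a else 0))"
        by (rule sum.cong) auto
      also have "\<dots> = (\<Sum>s\<in>B. \<epsilon> / a)" unfolding B_def using sum.inter_filter[OF finL, of "\<lambda>_. \<epsilon> / a" "\<lambda>s. \<not> fat T \<epsilon> s"] by simp
      finally show ?thesis by simp
    qed
    finally have h1: "\<mu> \<le> N / a - card B * (\<epsilon> / a)" .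
    have h2: "N / a - \<mu> < \<epsilon> * \<epsilon> * \<mu>"
      using ks[OF k] by (simp add: dist_real_def a_def N_def L_def abs_less_iff)
    have h3: "\<mu> \<le> N / a" using h1 apos assms(3) by (smt (verit) divide_nonneg_pos of_nat_0_le_iff mult_nonneg_nonneg)
    have "\<epsilon> * card B / a < \<epsilon> * \<epsilon> * \<mu>" using h1 h2 by (simp add: algebra_simps)
    also have "\<dots> \<le> \<epsilon> * \<epsilon> * (N / a)" using h3 assms(3) by (intro mult_left_mono) auto
    finally have "\<epsilon> * (card B / a) < \<epsilon> * (\<epsilon> * (N / a))" by (simp add: algebra_simps)
    hence "card B / a < \<epsilon> * (N / a)" using assms(3) mult_less_cancel_left_pos by blast
    hence "card B / a < (\<epsilon> * N) / a" by simp
    hence "card B < \<epsilon> * N" using apos by (simp add: divide_less_cancel)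
    hence "real N * (1 - \<epsilon>) \<le> card F" using NFB by (simp add: algebra_simps)
    thus "real (card {s\<in>level T k. fat T \<epsilon> s}) \<ge> real (card (level T k)) * (1 - \<epsilon>)"
      by (simp add: F_def N_def L_def)
  qed
qed

end
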